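(* Let $K$ be an infinite compact Hausdorff space. Then $biort_1(C(K))=s(K)$.
   Context: $C(K)$ is the Banach space of continuous real functions on $K$ with the sup norm; functionals on $C(K)$ are identified with Radon measures $\mu\in M(K)$, $\mu(f)=\int f\,d\mu$; $\delta_x$ is the Dirac measure at $x$. A measure is $n$-supported if it equals $a_1\delta_{x_1}+\dots+a_n\delta_{x_n}$ for some $x_k\in K$, $a_k\in\mathbb R$. A biorthogonal system $(f_i,\mu_i)_{i\in I}$ in $C(K)$ ($\mu_i(f_i)=1$, $\mu_i(f_j)=0$ for $i\neq j$) is $n$-supported if all $\mu_i$ are $n$-supported; $biort_n(C(K))$ is the supremum of $|I|$ over $n$-supported biorthogonal systems. $s(K)$ is the supremum of cardinalities of discrete subspaces of $K$. *)

theory Defs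
  imports "HOL-Analysis.Analysis"
begin

unbundle cardinal_syntax

text \<open>A functional on C(K) is modelled as a map mu :: ('a => real) => real, of which only the
  values on continuous functions matter.\<close>

definition CK :: "'a topology \<Rightarrow> ('a \<Rightarrow> real) set" where
  "CK X = {f. continuous_map X euclideanreal f}"

definition n_supported :: "'a topology \<Rightarrow> nat \<Rightarrow> (('a \<Rightarrow> real) \<Rightarrow> real) \<Rightarrow> bool" where
  "n_supported X n \<mu> \<longleftrightarrow>
     (\<exists>a :: nat \<Rightarrow> real. \<exists>x :: nat \<Rightarrow> 'a. (\<forall>k<n. x k \<in> topspace X) \<and>
        (\<forall>f\<in>CK X. \<mu> f = (\<Sum>k<n. a k * f (x k))))"

definition biorth_system :: "'a topology \<Rightarrow> nat \<Rightarrow>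
    (('a \<Rightarrow> real) \<times> (('a \<Rightarrow> real) \<Rightarrow> real)) set \<Rightarrow> bool" where
  "biorth_system X n S \<longleftrightarrow>
     (\<forall>(f, \<mu>)\<in>S. f \<in> CK X \<and> n_supported X n \<mu> \<and> \<mu> f = 1) \<and>
     (\<forall>(f, \<mu>)\<in>S. \<forall>(g, \<nu>)\<in>S. (f, \<mu>) \<noteq> (g, \<nu>) \<longrightarrow> \<mu> g = 0)"

text \<open>"biort_n(C(K)) <= |T|": every n-supported biorthogonal system has at most |T| elements.\<close>
definition biort_le :: "'a topology \<Rightarrow> nat \<Rightarrow> 'b set \<Rightarrow> bool" where
  "biort_le X n T \<longleftrightarrow> (\<forall>S. biorth_system X n S \<longrightarrow> |S| \<le>o |T| )"

text \<open>"s(K) <= |T|": every discrete subspace of K has at most |T| elements.\<close>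
definition spread_le :: "'a topology \<Rightarrow> 'b set \<Rightarrow> bool" where
  "spread_le X T \<longleftrightarrow>
     (\<forall>D. D \<subseteq> topspace X \<and> subtopology X D = discrete_topology D \<longrightarrow> |D| \<le>o |T| )"

end

theory Submission
  imports Defs
begin

lemma discrete_sub_iff:
  assumes "D \<subseteq> topspace X"
  shows "subtopology X D = discrete_topology D \<longleftrightarrow> (\<forall>d\<in>D. \<exists>U. openin X U \<and> U \<inter> D = {d})"
proof -
  have "subtopology X D = discrete_topology D \<longleftrightarrow> (\<forall>d\<in>D. openin (subtopology X D) {d})"
    using discrete_topology_unique[of D "subtopology X D"] assms
    by (auto simp: inf.absorb2)
  also have "\<dots> \<longleftrightarrow> (\<forall>d\<in>D. \<exists>U. openin X U \<and> U \<inter> D = {d})"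
    unfolding openin_subtopology by (metis Int_commute)
  finally show ?thesis .
qed

lemma n_supported_1:
  assumes "n_supported X 1 \<mu>"
  shows "\<exists>a x. x \<in> topspace X \<and> (\<forall>f\<in>CK X. \<mu> f = a * f x)"
  using assms unfolding n_supported_def by auto

theorem mainTheorem5:
  fixes X :: "'a topology" and T :: "'b set"
  assumes "compact_space X" and "Hausdorff_space X" and "infinite (topspace X)"
  shows "biort_le X 1 T \<longleftrightarrow> spread_le X T"
proof
  assume B: "biort_le X 1 T"
  have N: "normal_space X"
    using assms compact_Hausdorff_or_regular_imp_normal_space by blast
  show "spread_le X T"
    unfolding spread_le_def
  proof (intro allI impI)
    fix D assume D: "D \<subseteq> topspace X \<and> subtopology X D = discrete_topology D"
    hence DU: "\<forall>d\<in>D. \<exists>U. openin X U \<and> U \<inter> D = {d}"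
      using discrete_sub_iff by blast
    have ex: "\<exists>f. continuous_map X euclideanreal f \<and> f d = 1 \<and> (\<forall>e\<in>D. e \<noteq> d \<longrightarrow> f e = 0)"
      if "d \<in> D" for d
    proof -
      obtain U where U: "openin X U" "U \<inter> D = {d}" using DU \<open>d \<in> D\<close> by blast
      have c1: "closedin X {d}"
        using D that assms(2) by (meson Hausdorff_imp_t1_space closedin_t1_singleton subsetD)
      have c2: "closedin X (topspace X - U)" using U(1) by blast
      have dj: "disjnt {d} (topspace X - U)" using U(2) by (auto simp: disjnt_def)
      obtain f where f: "continuous_map X euclideanreal f" "f ` {d} \<subseteq> {1}" "f ` (topspace X - U) \<subseteq> {0}"
        using Urysohn_lemma_alt[OF N c1 c2 dj, of 1 0] by blast
      show ?thesis
        apply (rule exI[of _ f])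
        using f U D by auto
    qed
    define F where "F d = (SOME f. continuous_map X euclideanreal f \<and> f d = 1 \<and> (\<forall>e\<in>D. e \<noteq> d \<longrightarrow> f e = 0))" for d
    have F: "continuous_map X euclideanreal (F d) \<and> F d d = 1 \<and> (\<forall>e\<in>D. e \<noteq> d \<longrightarrow> F d e = 0)"
      if "d \<in> D" for d
      unfolding F_def using someI_ex[OF ex[OF that]] .
    define S :: "(('a \<Rightarrow> real) \<times> (('a \<Rightarrow> real) \<Rightarrow> real)) set" where "S = (\<lambda>d. (F d, \<lambda>g::'a\<Rightarrow>real. g d)) ` D"
    have bs: "biorth_system X 1 S"
      unfolding biorth_system_def S_def
    proof (intro conjI)
     show "\<forall>p\<in>(\<lambda>d. (F d, \<lambda>g::'a\<Rightarrow>real. g d)) ` D. case p of (f, \<mu>) \<Rightarrow> f \<in> CK X \<and> n_supported X 1 \<mu> \<and> \<mu> f = 1"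
     proof
      fix p assume "p \<in> (\<lambda>d. (F d, \<lambda>g::'a\<Rightarrow>real. g d)) ` D"
      then obtain d where d: "d \<in> D" "p = (F d, \<lambda>g::'a\<Rightarrow>real. g d)" by blast
      have "n_supported X 1 (\<lambda>g::'a\<Rightarrow>real. g d)"
        unfolding n_supported_def
        apply (rule exI[of _ "\<lambda>_. 1"], rule exI[of _ "\<lambda>_. d"])
        using d D by auto
      then show "case p of (f, \<mu>) \<Rightarrow> f \<in> CK X \<and> n_supported X 1 \<mu> \<and> \<mu> f = 1"
        using d F[OF d(1)] by (auto simp: CK_def)
     qed
    next
      show "\<forall>(f, \<mu>)\<in>(\<lambda>d. (F d, \<lambda>g::'a\<Rightarrow>real. g d)) ` D. \<forall>(g, \<nu>)\<in>(\<lambda>d. (F d, \<lambda>g::'a\<Rightarrow>real. g d)) ` D. (f, \<mu>) \<noteq> (g, \<nu>) \<longrightarrow> \<mu> g = 0"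
      proof
        fix p assume "p \<in> (\<lambda>d. (F d, \<lambda>g::'a\<Rightarrow>real. g d)) ` D"
        then obtain d where d: "d \<in> D" "p = (F d, \<lambda>g::'a\<Rightarrow>real. g d)" by blast
        have "\<forall>q\<in>(\<lambda>d. (F d, \<lambda>g::'a\<Rightarrow>real. g d)) ` D. (F d, \<lambda>g::'a\<Rightarrow>real. g d) \<noteq> q \<longrightarrow> fst q d = 0"
        proof
          fix q assume "q \<in> (\<lambda>d. (F d, \<lambda>g::'a\<Rightarrow>real. g d)) ` D"
          then obtain e where e: "e \<in> D" "q = (F e, \<lambda>g::'a\<Rightarrow>real. g e)" by blast
          show "(F d, \<lambda>g::'a\<Rightarrow>real. g d) \<noteq> q \<longrightarrow> fst q d = 0"
            using F[OF e(1)] d(1) e(2) by auto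
        qed
        then show "case p of (f, \<mu>) \<Rightarrow> \<forall>(g, \<nu>)\<in>(\<lambda>d. (F d, \<lambda>g::'a\<Rightarrow>real. g d)) ` D. (f, \<mu>) \<noteq> (g, \<nu>) \<longrightarrow> \<mu> g = 0"
          unfolding d(2) by (simp add: case_prod_beta)
      qed
    qed
    have "|S| \<le>o |T|" using B bs unfolding biort_le_def by blast
    moreover have "|D| \<le>o |S|"
    proof -
      have "inj_on (\<lambda>d. (F d, \<lambda>g::'a\<Rightarrow>real. g d)) D"
      proof (rule inj_onI)
        fix d e assume "d \<in> D" "e \<in> D" "(F d, \<lambda>g::'a\<Rightarrow>real. g d) = (F e, \<lambda>g::'a\<Rightarrow>real. g e)"
        then have "F d d = F e d" by (metis fst_conv)
        then show "d = e" using F[OF \<open>d \<in> D\<close>] F[OF \<open>e \<in> D\<close>] \<open>d \<in> D\<close> by force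
      qed
      then show ?thesis unfolding S_def using card_of_ordLeq by blast
    qed
    ultimately show "|D| \<le>o |T|" using ordLeq_transitive by blast
  qed
next
  assume Sp: "spread_le X T"
  show "biort_le X 1 T"
    unfolding biort_le_def
  proof (intro allI impI)
    fix S assume bs: "biorth_system X 1 S"
    have H1: "\<forall>(f, \<mu>)\<in>S. f \<in> CK X \<and> n_supported X 1 \<mu> \<and> \<mu> f = 1"
      using bs unfolding biorth_system_def by (rule conjunct1)
    have H2: "\<forall>(f, \<mu>)\<in>S. \<forall>(g, \<nu>)\<in>S. (f, \<mu>) \<noteq> (g, \<nu>) \<longrightarrow> \<mu> g = 0"
      using bs unfolding biorth_system_def by (rule conjunct2)
    have H1': "fst p \<in> CK X \<and> n_supported X 1 (snd p) \<and> snd p (fst p) = 1" if "p \<in> S" for p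
    proof -
      obtain f \<mu> where p: "p = (f, \<mu>)" by (cases p)
      have "case p of (f, \<mu>) \<Rightarrow> f \<in> CK X \<and> n_supported X 1 \<mu> \<and> \<mu> f = 1"
        using H1 that by (rule bspec)
      then show ?thesis unfolding p by simp
    qed
    have ex: "\<exists>ax. snd ax \<in> topspace X \<and> (\<forall>g\<in>CK X. snd p g = fst ax * g (snd ax))" if "p \<in> S" for p
    proof -
      have "n_supported X 1 (snd p)" using H1'[OF that] by blast
      then obtain a x where "x \<in> topspace X" "\<forall>g\<in>CK X. snd p g = a * g x"
        using n_supported_1 by blast
      then show ?thesis by (intro exI[of _ "(a, x)"]) auto
    qed
    define AX :: "('a \<Rightarrow> real) \<times> (('a \<Rightarrow> real) \<Rightarrow> real) \<Rightarrow> real \<times> 'a" where "AX p = (SOME ax. snd ax \<in> topspace X \<and> (\<forall>g\<in>CK X. snd p g = fst ax * g (snd ax)))" for p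
    define P where "P p = snd (AX p)" for p
    define A where "A p = fst (AX p)" for p
    have PA: "P p \<in> topspace X \<and> (\<forall>g\<in>CK X. snd p g = A p * g (P p))" if "p \<in> S" for p
      unfolding P_def A_def AX_def using someI_ex[OF ex[OF that]] .
    have CKf: "fst p \<in> CK X" and one: "snd p (fst p) = 1" if "p \<in> S" for p
      using H1'[OF that] by blast+
    have zero: "snd p (fst q) = 0" if "p \<in> S" "q \<in> S" "p \<noteq> q" for p q
    proof -
      obtain f \<mu> where p: "p = (f, \<mu>)" by (cases p)
      obtain g \<nu> where q: "q = (g, \<nu>)" by (cases q)
      have "case p of (f, \<mu>) \<Rightarrow> \<forall>(g, \<nu>)\<in>S. (f, \<mu>) \<noteq> (g, \<nu>) \<longrightarrow> \<mu> g = 0"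
        using H2 that(1) by (rule bspec)
      then have "\<forall>(g, \<nu>)\<in>S. (f, \<mu>) \<noteq> (g, \<nu>) \<longrightarrow> \<mu> g = 0" unfolding p by simp
      then have "case q of (g, \<nu>) \<Rightarrow> (f, \<mu>) \<noteq> (g, \<nu>) \<longrightarrow> \<mu> g = 0"
        using that(2) by (rule bspec)
      then have "(f, \<mu>) \<noteq> (g, \<nu>) \<longrightarrow> \<mu> g = 0" unfolding q by simp
      then show ?thesis using that unfolding p q by simp
    qed
    have eq1: "A p * fst p (P p) = 1" if "p \<in> S" for p
    proof -
      have "snd p (fst p) = A p * fst p (P p)" using PA[OF that] CKf[OF that] by blast
      then show ?thesis using one[OF that] by simp
    qed
    have nz: "fst p (P p) \<noteq> 0" if "p \<in> S" for p
      using eq1[OF that] by (metis mult_zero_right zero_neq_one)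
    have z: "fst q (P p) = 0" if "p \<in> S" "q \<in> S" "p \<noteq> q" for p q
    proof -
      have "snd p (fst q) = A p * fst q (P p)" using PA[OF that(1)] CKf[OF that(2)] by blast
      then have "A p * fst q (P p) = 0" using zero[OF that] by simp
      moreover have "A p \<noteq> 0" using eq1[OF that(1)] by (metis mult_zero_left zero_neq_one)
      ultimately show ?thesis by simp
    qed
    have inj: "inj_on P S"
    proof (rule inj_onI)
      fix p q assume "p \<in> S" "q \<in> S" "P p = P q"
      then show "p = q" using z[of p q] nz[of q] by auto
    qed
    define D where "D = P ` S"
    have Dsub: "D \<subseteq> topspace X" using PA unfolding D_def by blast
    have "\<forall>d\<in>D. \<exists>U. openin X U \<and> U \<inter> D = {d}"
    proof
      fix d assume "d \<in> D"
      then obtain p where p: "p \<in> S" "d = P p" unfolding D_def by blast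
      define U where "U = {x \<in> topspace X. fst p x \<in> - {0}}"
      have "openin X U"
        unfolding U_def
        apply (rule openin_continuous_map_preimage[of X euclideanreal])
        using CKf[OF p(1)] by (auto simp: CK_def)
      moreover have "U \<inter> D = {d}"
      proof
        show "{d} \<subseteq> U \<inter> D" using p nz[OF p(1)] PA[OF p(1)] unfolding U_def D_def by auto
        show "U \<inter> D \<subseteq> {d}"
        proof
          fix y assume y: "y \<in> U \<inter> D"
          then obtain q where q: "q \<in> S" "y = P q" unfolding D_def by blast
          have "fst p (P q) \<noteq> 0" using y q unfolding U_def by auto
          then have "p = q" using z[OF q(1) p(1)] by auto
          then show "y \<in> {d}" using p q by simp
        qed
      qed
      ultimately show "\<exists>U. openin X U \<and> U \<inter> D = {d}" by blast
    qed
    then have "subtopology X D = discrete_topology D" using discrete_sub_iff[OF Dsub] by blast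
    then have "|D| \<le>o |T|" using Sp Dsub unfolding spread_le_def by blast
    moreover have "|S| \<le>o |D|" using inj unfolding D_def using card_of_ordLeq by blast
    ultimately show "|S| \<le>o |T|" using ordLeq_transitive by blast
  qed
qed

end
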